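(* Let $q$ be a prime power and $1\le t_i\le t_o<s$. If there exists a linear $(t_i,t_o,s,q)$-AONT, then there exists a linear $(t_i,t_o,s-1,q)$-AONT.
   Context: A linear $(t_i,t_o,s,q)$-AONT is given by an invertible $s\times s$ matrix $M$ over $\mathbb{F}_q$ defining the map $\mathbf{x}\mapsto\mathbf{y}=\mathbf{x}M^{-1}$ on row vectors of $\mathbb{F}_q^s$, such that for every set $I$ of $t_i$ input coordinates and every set $J$ of $s-t_o$ output coordinates, the pair $((x_i)_{i\in I},(y_j)_{j\in J})$ takes every value in $\mathbb{F}_q^{t_i+s-t_o}$ equally often (exactly $q^{t_o-t_i}$ times) as $\mathbf{x}$ ranges over $\mathbb{F}_q^s$. Equivalently, $M$ is invertible and every $t_o\times t_i$ submatrix of $M$ has rank $t_i$. *)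

theory Defs
  imports "Jordan_Normal_Form.DL_Rank_Submatrix"
begin

definition mat_rank :: "'a::field mat \<Rightarrow> nat" where
  "mat_rank A = vec_space.rank (dim_row A) A"

text \<open>Linear (t_i,t_o,s,q)-AONT given by the s x s matrix M over the field 'a (q = CARD('a)):
  M is invertible and every t_o x t_i submatrix (rows = t_o output coordinates,
  columns = t_i input coordinates) has rank t_i.\<close>
definition linear_AONT :: "nat \<Rightarrow> nat \<Rightarrow> nat \<Rightarrow> 'a::field mat \<Rightarrow> bool" where
  "linear_AONT ti to s M \<longleftrightarrow>
     M \<in> carrier_mat s s \<and> invertible_mat M \<and>
     (\<forall>R C. R \<subseteq> {..<s} \<and> C \<subseteq> {..<s} \<and> card R = to \<and> card C = ti \<longrightarrow>
        mat_rank (submatrix M R C) = ti)"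

end

theory Submission
  imports Defs
begin

lemma pick_image_mono:
  assumes f: "strict_mono (f::nat\<Rightarrow>nat)" and n: "n < card R \<or> infinite R"
  shows "pick (f ` R) n = f (pick R n)"
proof -
  let ?x = "pick R n"
  have x: "?x \<in> R" using pick_in_set[OF n] .
  have "{a \<in> f`R. a < f ?x} = f ` {a\<in>R. a < ?x}" using strict_mono_less[OF f] by auto
  moreover have "inj_on f {a\<in>R. a < ?x}" using strict_mono_imp_inj_on[OF f] inj_on_subset by blast
  ultimately have "card {a \<in> f`R. a < f ?x} = n" using card_image card_pick[OF n] by metis
  then show ?thesis using pick_card_in_set[of "f ?x" "f`R"] x by auto
qed

definition skip :: "nat \<Rightarrow> nat \<Rightarrow> nat" where
  "skip j k = (if k < j then k else Suc k)"

lemma skip_mono: "strict_mono (skip j)"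
  unfolding strict_mono_def skip_def by auto

lemma skip_image: "skip j ` UNIV = -{j}"
proof -
  have "x \<in> range (skip j)" if "x \<noteq> j" for x
  proof (cases "x < j")
    case True then show ?thesis by (metis rangeI skip_def)
  next
    case False then have "x = skip j (x - 1)" using that unfolding skip_def by auto
    then show ?thesis by blast
  qed
  moreover have "skip j k \<noteq> j" for k unfolding skip_def by auto
  ultimately show ?thesis by auto
qed

lemma pick_skip: "pick (-{j}) k = skip j k"
  using pick_image_mono[OF skip_mono[of j], where n=k and R=UNIV] by (simp add: skip_image pick_UNIV)

lemma skip0: "skip 0 = Suc" unfolding skip_def by auto

lemma card_skip_part: assumes "j < s" shows "card {i. i < s \<and> i \<in> -{j}} = s - 1"
proof -
  have "{i. i < s \<and> i \<in> -{j}} = {..<s} - {j}" by auto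
  then show ?thesis using assms by simp
qed

lemma card_skip_image: assumes "R \<subseteq> {..<s-1}" "j < s"
  shows "card {i. i < s \<and> i \<in> skip j ` R} = card R"
proof -
  have "{i. i < s \<and> i \<in> skip j ` R} = skip j ` R" using assms unfolding skip_def by auto
  then show ?thesis using card_image strict_mono_imp_inj_on[OF skip_mono] inj_on_subset
    by (metis subset_UNIV)
qed

lemma sub_sub:
  assumes M: "M \<in> carrier_mat s s" and j: "j < s" and R: "R \<subseteq> {..<s-1}" and C: "C \<subseteq> {..<s-1}"
  shows "submatrix (submatrix M (-{0}) (-{j})) R C = submatrix M (skip 0 ` R) (skip j ` C)"
proof -
  let ?N = "submatrix M (-{0}) (-{j})"
  have dN: "dim_row ?N = s - 1" "dim_col ?N = s - 1"
    using M j card_skip_part[of 0 s] card_skip_part[of j s] by (auto simp: dim_submatrix)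
  have cR: "card {i. i < s - 1 \<and> i \<in> R} = card R" using R
    by (metis (no_types, lifting) Collect_cong Collect_mem_eq lessThan_iff subsetD)
  have cC: "card {i. i < s - 1 \<and> i \<in> C} = card C" using C
    by (metis (no_types, lifting) Collect_cong Collect_mem_eq lessThan_iff subsetD)
  have fR: "finite R" "finite C" using R C finite_subset by auto
  show ?thesis
  proof (rule eq_matI)
    show "dim_row (submatrix ?N R C) = dim_row (submatrix M (skip 0 ` R) (skip j ` C))"
      using dN cR M card_skip_image[OF R, of 0] j by (simp add: dim_submatrix)
    show "dim_col (submatrix ?N R C) = dim_col (submatrix M (skip 0 ` R) (skip j ` C))"
      using dN cC M card_skip_image[OF C j] j by (simp add: dim_submatrix)
    fix a b assume a: "a < dim_row (submatrix M (skip 0 ` R) (skip j ` C))"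
      and b: "b < dim_col (submatrix M (skip 0 ` R) (skip j ` C))"
    have a': "a < card R" using a M card_skip_image[OF R, of 0] j by (simp add: dim_submatrix)
    have b': "b < card C" using b M card_skip_image[OF C j] by (simp add: dim_submatrix)
    have pa: "pick R a < s - 1" using pick_in_set[of a R] a' R by auto
    have pb: "pick C b < s - 1" using pick_in_set[of b C] b' C by auto
    have "submatrix ?N R C $$ (a, b) = ?N $$ (pick R a, pick C b)"
      by (rule submatrix_index) (use a' b' dN cR cC in auto)
    also have "\<dots> = M $$ (pick (-{0}) (pick R a), pick (-{j}) (pick C b))"
      by (rule submatrix_index) (use pa pb M card_skip_part[of 0 s] card_skip_part[of j s] j in auto)
    also have "\<dots> = M $$ (skip 0 (pick R a), skip j (pick C b))" by (simp add: pick_skip)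
    also have "\<dots> = M $$ (pick (skip 0 ` R) a, pick (skip j ` C) b)"
      using pick_image_mono[OF skip_mono[of 0], where n=a and R=R] pick_image_mono[OF skip_mono[of j], where n=b and R=C] a' b' by simp
    also have "\<dots> = submatrix M (skip 0 ` R) (skip j ` C) $$ (a, b)"
      by (rule submatrix_index[symmetric]) (use a' b' M card_skip_image[OF R, of 0] card_skip_image[OF C j] j in auto)
    finally show "submatrix ?N R C $$ (a, b) = submatrix M (skip 0 ` R) (skip j ` C) $$ (a, b)" .
  qed
qed

lemma mat_delete_sub:
  assumes M: "M \<in> carrier_mat s s" and j: "j < s"
  shows "mat_delete M 0 j = submatrix M (-{0}) (-{j})"
proof -
  have dN: "dim_row (submatrix M (-{0}) (-{j})) = s - 1" "dim_col (submatrix M (-{0}) (-{j})) = s - 1"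
    using M j card_skip_part[of 0 s] card_skip_part[of j s] by (auto simp: dim_submatrix)
  show ?thesis
  proof (rule eq_matI)
    fix a b assume a: "a < dim_row (submatrix M (-{0}) (-{j}))" and b: "b < dim_col (submatrix M (-{0}) (-{j}))"
    have "submatrix M (-{0}) (-{j}) $$ (a,b) = M $$ (pick (-{0}) a, pick (-{j}) b)"
      by (rule submatrix_index) (use a b dN M card_skip_part[of 0 s] card_skip_part[of j s] j in auto)
    then show "mat_delete M 0 j $$ (a, b) = submatrix M (-{0}) (-{j}) $$ (a, b)"
      using a b dN M unfolding mat_delete_def by (simp add: pick_skip skip_def)
  qed (use dN M in auto)
qed

lemma invertible_det_nz:
  assumes M: "(M::'a::field mat) \<in> carrier_mat n n" and inv: "invertible_mat M"
  shows "det M \<noteq> 0"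
proof -
  obtain B where AB: "M * B = 1\<^sub>m n" and BA: "B * M = 1\<^sub>m (dim_row B)"
    using inv M unfolding invertible_mat_def inverts_mat_def by auto
  have "dim_row B = n" using arg_cong[OF BA, of dim_col] M by simp
  moreover have "dim_col B = n" using arg_cong[OF AB, of dim_col] by simp
  ultimately have B: "B \<in> carrier_mat n n" by auto
  from arg_cong[OF BA, of det, unfolded det_mult[OF B M] det_one] \<open>dim_row B = n\<close>
  show ?thesis by auto
qed

lemma det_nz_invertible:
  assumes M: "(M::'a::field mat) \<in> carrier_mat n n" and d: "det M \<noteq> 0"
  shows "invertible_mat M"
proof -
  have "M \<in> Units (ring_mat TYPE('a) n undefined)" by (rule det_non_zero_imp_unit[OF M d])
  then obtain B where B: "B \<in> carrier_mat n n" "B * M = 1\<^sub>m n" "M * B = 1\<^sub>m n"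
    unfolding Units_def ring_mat_def by auto
  then show ?thesis using M unfolding invertible_mat_def inverts_mat_def square_mat.simps by auto
qed

theorem mainTheorem7:
  fixes M :: "'a::{finite,field} mat" and ti to s :: nat
  assumes "1 \<le> ti" and "ti \<le> to" and "to < s"
    and "linear_AONT ti to s M"
  shows "\<exists>M' :: 'a mat. linear_AONT ti to (s - 1) M'"
proof -
  have M: "M \<in> carrier_mat s s" and inv: "invertible_mat M"
    and sub: "\<And>R C. R \<subseteq> {..<s} \<Longrightarrow> C \<subseteq> {..<s} \<Longrightarrow> card R = to \<Longrightarrow> card C = ti \<Longrightarrow>
        mat_rank (submatrix M R C) = ti"
    using assms(4) unfolding linear_AONT_def by auto
  have s0: "0 < s" using assms by auto
  have "det M \<noteq> 0" by (rule invertible_det_nz[OF M inv])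
  then have "(\<Sum>j<s. M $$ (0,j) * cofactor M 0 j) \<noteq> 0" using laplace_expansion_row[OF M s0] by simp
  then obtain j where j: "j < s" and cf: "cofactor M 0 j \<noteq> 0"
    by (metis (no_types, lifting) mult_zero_right sum.neutral lessThan_iff)
  have dd: "det (mat_delete M 0 j) \<noteq> 0" using cf unfolding cofactor_def by auto
  define M' where "M' = submatrix M (-{0}) (-{j})"
  have M'c: "M' \<in> carrier_mat (s-1) (s-1)"
    using M j card_skip_part[of 0 s] card_skip_part[of j s] s0 by (auto simp: dim_submatrix M'_def)
  have "invertible_mat M'"
    by (rule det_nz_invertible[OF M'c]) (use dd mat_delete_sub[OF M j] M'_def in auto)
  moreover have "mat_rank (submatrix M' R C) = ti"
    if R: "R \<subseteq> {..<s-1}" and C: "C \<subseteq> {..<s-1}" and cr: "card R = to" and cc: "card C = ti" for R C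
  proof -
    have eq: "submatrix M' R C = submatrix M (skip 0 ` R) (skip j ` C)"
      unfolding M'_def by (rule sub_sub[OF M j R C])
    have inj: "inj_on (skip k) A" for k A using strict_mono_imp_inj_on[OF skip_mono] inj_on_subset by blast
    have "skip 0 ` R \<subseteq> {..<s}" "skip j ` C \<subseteq> {..<s}" using R C unfolding skip_def by auto
    moreover have "card (skip 0 ` R) = to" "card (skip j ` C) = ti"
      using card_image[OF inj] cr cc by auto
    ultimately show ?thesis using sub eq by auto
  qed
  ultimately show ?thesis using M'c unfolding linear_AONT_def by blast
qed

end
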